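(* Let $Q$ be an absolutely continuous stochastic algorithm with Hamiltonian $H$, and suppose that for all $k\in[n]$, $h\in\mathcal{H}$, $y,y'\in\mathcal{X}$ and $\mathbf{x}\in\mathcal{X}^n$ we have $D^k_{y,y'}H(h,\mathbf{x})\le c$ and $h(y)\in[0,b]$. Then for $\delta>0$, with probability at least $1-\delta$ in $\mathbf{X}\sim\mu^n$ and $h\sim Q_{\mathbf{X}}$, $$\Delta(h,\mathbf{X})\le 2\sqrt{\hat L(h,\mathbf{X})\,b\left(c^2+\frac{\ln(1/\delta)}{n}\right)}+5b\left(c^2+\frac{\ln(1/\delta)}{n}\right).$$
   Context: $\mathcal{X}$ is a measurable space with probability measure $\mu$, $\mathbf{X}=(X_1,\dots,X_n)\sim\mu^n$, $X\sim\mu$. $\mathcal{H}$ is a measurable space of measurable functions $h:\mathcal{X}\to[0,\infty)$ with nonnegative a-priori measure $\pi$. A stochastic algorithm $Q:\mathbf{x}\mapsto Q_{\mathbf{x}}$ (probability measures on $\mathcal{H}$) is absolutely continuous if each $Q_{\mathbf{x}}$ and $\pi$ are mutually absolutely continuous. A measurable $H:\mathcal{H}\times\mathcal{X}^n\to\mathbb{R}$ is a Hamiltonian for $Q$ if $dQ_{\mathbf{x}}(h)=e^{H(h,\mathbf{x})}d\pi(h)/Z(\mathbf{x})$ with $Z(\mathbf{x})=\int_{\mathcal{H}}e^{H(h,\mathbf{x})}d\pi(h)$. Empirical loss $\hat L(h,\mathbf{x})=\frac1n\sum_{i=1}^n h(x_i)$; generalization gap $\Delta(h,\mathbf{x})=\mathbb{E}[h(X)]-\hat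 L(h,\mathbf{x})$. $S^k_y\mathbf{x}$ replaces the $k$-th coordinate of $\mathbf{x}$ by $y$; $D^k_{y,y'}G(h,\mathbf{x})=G(h,S^k_y\mathbf{x})-G(h,S^k_{y'}\mathbf{x})$. Probability "in $\mathbf{X}\sim\mu^n$ and $h\sim Q_{\mathbf{X}}$" is w.r.t. the joint law. All functions are assumed to have finite exponential moments of all orders. *)

theory Defs
  imports "HOL-Probability.Probability"
begin

definition sample_measure :: "nat \<Rightarrow> 'x measure \<Rightarrow> (nat \<Rightarrow> 'x) measure" where
  "sample_measure n M = PiM {..<n} (\<lambda>_. M)"

definition emp_loss :: "nat \<Rightarrow> ('x \<Rightarrow> real) \<Rightarrow> (nat \<Rightarrow> 'x) \<Rightarrow> real" where
  "emp_loss n h x = (\<Sum>i<n. h (x i)) / real n"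

definition gen_gap :: "'x measure \<Rightarrow> nat \<Rightarrow> ('x \<Rightarrow> real) \<Rightarrow> (nat \<Rightarrow> 'x) \<Rightarrow> real" where
  "gen_gap M n h x = (\<integral>y. h y \<partial>M) - emp_loss n h x"

definition subst_coord :: "nat \<Rightarrow> 'x \<Rightarrow> (nat \<Rightarrow> 'x) \<Rightarrow> (nat \<Rightarrow> 'x)" where
  "subst_coord k y x = x(k := y)"

definition diff_op :: "nat \<Rightarrow> 'x \<Rightarrow> 'x \<Rightarrow> ('h \<Rightarrow> (nat \<Rightarrow> 'x) \<Rightarrow> real) \<Rightarrow> 'h \<Rightarrow> (nat \<Rightarrow> 'x) \<Rightarrow> real" where
  "diff_op k y y' G h x = G h (subst_coord k y x) - G h (subst_coord k y' x)"

definition partition_fn :: "'h measure \<Rightarrow> ('h \<Rightarrow> 'z \<Rightarrow> real) \<Rightarrow> 'z \<Rightarrow> real" where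
  "partition_fn \<pi> H x = (\<integral>h. exp (H h x) \<partial>\<pi>)"

definition has_hamiltonian ::
  "'h measure \<Rightarrow> 'z measure \<Rightarrow> ('z \<Rightarrow> 'h measure) \<Rightarrow> ('h \<Rightarrow> 'z \<Rightarrow> real) \<Rightarrow> bool" where
  "has_hamiltonian \<pi> Z Q H \<longleftrightarrow>
     (\<lambda>(h, x). H h x) \<in> borel_measurable (\<pi> \<Otimes>\<^sub>M Z) \<and>
     (\<forall>x\<in>space Z. integrable \<pi> (\<lambda>h. exp (H h x)) \<and>
        Q x = density \<pi> (\<lambda>h. ennreal (exp (H h x) / partition_fn \<pi> H x)))"

definition absolutely_continuous_alg :: "'h measure \<Rightarrow> 'z measure \<Rightarrow> ('z \<Rightarrow> 'h measure) \<Rightarrow> bool" where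
  "absolutely_continuous_alg \<pi> Z Q \<longleftrightarrow>
     (\<forall>x\<in>space Z. prob_space (Q x) \<and> sets (Q x) = sets \<pi> \<and>
        absolutely_continuous \<pi> (Q x) \<and> absolutely_continuous (Q x) \<pi>)"

end

theory Submission
  imports Defs
begin

lemma exp_neg_quad:
  fixes u :: real assumes "0 \<le> u"
  shows "exp (-u) \<le> 1 - u + u\<^sup>2/2"
proof -
  define \<phi> where "\<phi> = (\<lambda>u::real. 1 - u + u\<^sup>2/2 - exp (-u))"
  have d: "(\<phi> has_real_derivative (-1 + v + exp (-v))) (at v)" for v
    unfolding \<phi>_def by (auto intro!: derivative_eq_intros simp: power2_eq_square)
  have "\<phi> 0 \<le> \<phi> u"
  proof (rule DERIV_nonneg_imp_nondecreasing[OF assms])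
    fix v assume "0 \<le> v" "v \<le> u"
    show "\<exists>y. (\<phi> has_real_derivative y) (at v) \<and> 0 \<le> y"
      using d[of v] exp_ge_add_one_self[of "-v"] by auto
  qed
  thus ?thesis by (simp add: \<phi>_def)
qed

lemma bern_mgf:
  fixes g :: "'a \<Rightarrow> real" and b l :: real
  assumes P: "prob_space M" and g[measurable]: "g \<in> borel_measurable M"
    and gb: "\<And>y. y \<in> space M \<Longrightarrow> 0 \<le> g y \<and> g y \<le> b" and l: "0 \<le> l"
  shows "integrable M (\<lambda>y. exp (l * ((\<integral>z. g z \<partial>M) - g y)))"
    "(\<integral>y. exp (l * ((\<integral>z. g z \<partial>M) - g y)) \<partial>M) \<le> exp (l\<^sup>2 * b * (\<integral>z. g z \<partial>M) / 2)"
proof -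
  interpret prob_space M by fact
  define m where "m = (\<integral>z. g z \<partial>M)"
  have ig: "integrable M g"
    by (rule integrable_const_bound[where B=b]) (use gb in auto)
  have ie: "integrable M (\<lambda>y. exp (l * (m - g y)))"
    by (rule integrable_const_bound[where B="exp (l * m)"]) (use gb l in \<open>auto simp: mult_left_mono\<close>)
  thus "integrable M (\<lambda>y. exp (l * ((\<integral>z. g z \<partial>M) - g y)))" by (simp add: m_def)
  have pw: "exp (l * (m - g y)) \<le> exp (l*m) * (1 - l * g y + l\<^sup>2 * b * g y / 2)" if y: "y \<in> space M" for y
  proof -
    have "exp (l * (m - g y)) = exp (l*m) * exp (- (l * g y))" by (simp add: exp_diff exp_minus field_simps right_diff_distrib)
    also have "exp (- (l * g y)) \<le> 1 - l * g y + (l * g y)\<^sup>2/2"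
      by (rule exp_neg_quad) (use gb[OF y] l in auto)
    also have "(l * g y)\<^sup>2 \<le> l\<^sup>2 * b * g y"
    proof -
      have "g y * g y \<le> b * g y" using gb[OF y] by (intro mult_right_mono) auto
      hence "(l*l) * (g y * g y) \<le> (l*l) * (b * g y)" by (intro mult_left_mono) auto
      thus ?thesis by (simp add: power2_eq_square algebra_simps)
    qed
    finally show ?thesis by (simp add: mult_left_mono)
  qed
  have "(\<integral>y. exp (l * (m - g y)) \<partial>M) \<le> (\<integral>y. exp (l*m) * (1 - l * g y + l\<^sup>2 * b * g y / 2) \<partial>M)"
    by (rule integral_mono[OF ie]) (use pw ig in auto)
  also have "\<dots> = exp (l*m) * (1 - l * m + l\<^sup>2 * b * m / 2)"
    using ig by (simp add: m_def prob_space algebra_simps)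
  also have "\<dots> \<le> exp (l*m) * exp (- (l * m) + l\<^sup>2 * b * m / 2)"
    by (rule mult_left_mono) (use exp_ge_add_one_self[of "- (l * m) + l\<^sup>2 * b * m / 2"] in \<open>auto simp: algebra_simps\<close>)
  also have "\<dots> = exp (l\<^sup>2 * b * m / 2)" by (simp flip: exp_add)
  finally show "(\<integral>y. exp (l * ((\<integral>z. g z \<partial>M) - g y)) \<partial>M) \<le> exp (l\<^sup>2 * b * (\<integral>z. g z \<partial>M) / 2)"
    by (simp add: m_def)
qed

lemma amgm_aux:
  fixes X Y r :: real assumes "r > 0"
  shows "X * Y \<le> (r * X\<^sup>2 + Y\<^sup>2 / r) / 2"
proof -
  have "0 \<le> (r * X - Y)\<^sup>2 / r" using assms by simp
  also have "(r * X - Y)\<^sup>2 / r = r * X\<^sup>2 + Y\<^sup>2 / r - 2 * X * Y"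
    using assms by (simp add: power2_eq_square field_simps)
  finally show ?thesis by simp
qed

lemma one_step:
  fixes e g :: "'a \<Rightarrow> real" and d b l :: real
  assumes P: "prob_space M" and e[measurable]: "e \<in> borel_measurable M"
    and g[measurable]: "g \<in> borel_measurable M"
    and er: "\<And>y y'. y \<in> space M \<Longrightarrow> y' \<in> space M \<Longrightarrow> e y - e y' \<le> d"
    and e0: "(\<integral>y. e y \<partial>M) = 0"
    and gb: "\<And>y. y \<in> space M \<Longrightarrow> 0 \<le> g y \<and> g y \<le> b" and l: "0 \<le> l"
  shows "integrable M (\<lambda>y. exp (e y + l * ((\<integral>z. g z \<partial>M) - g y)))"
    "(\<integral>y. exp (e y + l * ((\<integral>z. g z \<partial>M) - g y)) \<partial>M) \<le> exp (d\<^sup>2 / 4 + l\<^sup>2 * b * (\<integral>z. g z \<partial>M))"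
proof -
  interpret prob_space M by fact
  define m where "m = (\<integral>z. g z \<partial>M)"
  obtain y0 where y0: "y0 \<in> space M" using not_empty by blast
  have eb: "\<bar>e y\<bar> \<le> \<bar>e y0\<bar> + \<bar>d\<bar>" if "y \<in> space M" for y
    using er[OF that y0] er[OF y0 that] by linarith
  have bdd: "bdd_below (e ` space M)"
  proof (rule bdd_belowI[where m="e y0 - d"])
    fix x assume "x \<in> e ` space M"
    then obtain y where "y \<in> space M" "x = e y" by auto
    thus "e y0 - d \<le> x" using er[OF y0, of y] by auto
  qed
  define a where "a = Inf (e ` space M)"
  have ea: "e y \<in> {a..a+d}" if y: "y \<in> space M" for y
  proof -
    have "a \<le> e y" unfolding a_def by (rule cInf_lower) (use y bdd in auto)
    moreover have "e y - d \<le> a" unfolding a_def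
      by (rule cInf_greatest) (use y er[OF y] in \<open>auto simp: algebra_simps\<close>)
    ultimately show ?thesis by auto
  qed
  interpret ib: interval_bounded_random_variable M e a "a+d"
    by unfold_locales (use ea in \<open>auto intro!: AE_I2\<close>)
  have ie2: "integrable M (\<lambda>y. exp (2 * e y))"
    by (rule integrable_const_bound[where B="exp (2 * (\<bar>e y0\<bar> + \<bar>d\<bar>))"]) (use eb in \<open>auto intro!: AE_I2 simp: abs_le_iff\<close>, use eb in \<open>fastforce simp: abs_le_iff\<close>)
  have h1: "(\<integral>y. exp (2 * e y) \<partial>M) \<le> exp (d\<^sup>2 / 2)"
  proof -
    have "ennreal (\<integral>y. exp (2 * e y) \<partial>M) = (\<integral>\<^sup>+y. exp (2 * e y) \<partial>M)"
      by (rule nn_integral_eq_integral[symmetric]) (use ie2 in auto)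
    also have "\<dots> \<le> ennreal (exp (2\<^sup>2 * (a + d - a)\<^sup>2 / 8))"
      by (rule ib.Hoeffdings_lemma_nn_integral_0) (use e0 in auto)
    finally show ?thesis by (simp add: ennreal_le_iff power2_eq_square)
  qed
  have l2: "0 \<le> 2 * l" using l by simp
  note bm = bern_mgf[OF P g gb l2]
  have h2: "(\<integral>y. exp (2 * (l * (m - g y))) \<partial>M) \<le> exp (2 * (l\<^sup>2 * b * m))"
    using bm(2) by (simp add: m_def power2_eq_square mult.assoc mult.left_commute)
  have ie3: "integrable M (\<lambda>y. exp (2 * (l * (m - g y))))"
    using bm(1) by (simp add: m_def mult.assoc)
  define A where "A = exp (d\<^sup>2 / 4)"
  define B where "B = exp (l\<^sup>2 * b * m)"
  define r where "r = B / A"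
  have r: "r > 0" by (simp add: r_def A_def B_def)
  have A2: "A\<^sup>2 = exp (d\<^sup>2 / 2)" by (simp add: A_def power2_eq_square flip: exp_add)
  have B2: "B\<^sup>2 = exp (2 * (l\<^sup>2 * b * m))" by (simp add: B_def power2_eq_square flip: exp_add)
  have pw: "exp (e y + l * (m - g y)) \<le> (r * exp (2 * e y) + exp (2 * (l * (m - g y))) / r) / 2" for y
  proof -
    have "exp (e y + l * (m - g y)) = exp (e y) * exp (l * (m - g y))" by (simp add: exp_add)
    also have "\<dots> \<le> (r * (exp (e y))\<^sup>2 + (exp (l * (m - g y)))\<^sup>2 / r) / 2" by (rule amgm_aux[OF r])
    also have "(exp (e y))\<^sup>2 = exp (2 * e y)" by (simp add: power2_eq_square flip: exp_add)
    also have "(exp (l * (m - g y)))\<^sup>2 = exp (2 * (l * (m - g y)))" by (simp add: power2_eq_square flip: exp_add)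
    finally show ?thesis .
  qed
  have ib2: "integrable M (\<lambda>y. (r * exp (2 * e y) + exp (2 * (l * (m - g y))) / r) / 2)"
    using ie2 ie3 by auto
  have ie: "integrable M (\<lambda>y. exp (e y + l * (m - g y)))"
    by (rule Bochner_Integration.integrable_bound[OF ib2]) (use pw r in \<open>auto intro!: AE_I2 order.trans[OF _ abs_ge_self]\<close>)
  thus "integrable M (\<lambda>y. exp (e y + l * ((\<integral>z. g z \<partial>M) - g y)))" by (simp add: m_def)
  have "(\<integral>y. exp (e y + l * (m - g y)) \<partial>M) \<le> (\<integral>y. (r * exp (2 * e y) + exp (2 * (l * (m - g y))) / r) / 2 \<partial>M)"
    by (rule integral_mono[OF ie ib2]) (use pw in auto)
  also have "\<dots> = (r * (\<integral>y. exp (2 * e y) \<partial>M) + (\<integral>y. exp (2 * (l * (m - g y))) \<partial>M) / r) / 2"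
    using ie2 ie3 by simp
  also have "\<dots> \<le> (r * A\<^sup>2 + B\<^sup>2 / r) / 2"
    using h1 h2 r unfolding A2 B2 by (intro divide_right_mono add_mono mult_left_mono) auto
  also have "\<dots> = A * B" unfolding r_def using r by (simp add: A_def B_def power2_eq_square field_simps)
  also have "\<dots> = exp (d\<^sup>2 / 4 + l\<^sup>2 * b * m)" by (simp add: A_def B_def exp_add)
  finally show "(\<integral>y. exp (e y + l * ((\<integral>z. g z \<partial>M) - g y)) \<partial>M) \<le> exp (d\<^sup>2 / 4 + l\<^sup>2 * b * (\<integral>z. g z \<partial>M))"
    by (simp add: m_def)
qed

lemma space_PiM_upd:
  "x \<in> space (PiM I (\<lambda>_. M)) \<Longrightarrow> y \<in> space M \<Longrightarrow> x(i := y) \<in> space (PiM (insert i I) (\<lambda>_. M))"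
  by (auto simp: space_PiM PiE_def extensional_def Pi_def)

lemma core:
  fixes M :: "'x measure" and f :: "(nat \<Rightarrow> 'x) \<Rightarrow> real" and g :: "'x \<Rightarrow> real" and B d b l :: real
  assumes P: "prob_space M" and I: "finite I"
    and f: "f \<in> borel_measurable (PiM I (\<lambda>_. M))"
    and fb: "\<And>x. x \<in> space (PiM I (\<lambda>_. M)) \<Longrightarrow> \<bar>f x\<bar> \<le> B"
    and fr: "\<And>i x y y'. i \<in> I \<Longrightarrow> x \<in> space (PiM I (\<lambda>_. M)) \<Longrightarrow> y \<in> space M \<Longrightarrow> y' \<in> space M
               \<Longrightarrow> f (x(i := y)) - f (x(i := y')) \<le> d"
    and g[measurable]: "g \<in> borel_measurable M"
    and gb: "\<And>y. y \<in> space M \<Longrightarrow> 0 \<le> g y \<and> g y \<le> b" and l: "0 \<le> l"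
  shows "(\<integral>\<^sup>+x. ennreal (exp (f x + (\<Sum>i\<in>I. l * ((\<integral>z. g z \<partial>M) - g (x i))))) \<partial>PiM I (\<lambda>_. M))
         \<le> ennreal (exp ((\<integral>x. f x \<partial>PiM I (\<lambda>_. M)) + real (card I) * (d\<^sup>2 / 4 + l\<^sup>2 * b * (\<integral>z. g z \<partial>M))))"
  using I f fb fr
proof (induction I arbitrary: f rule: finite_induct)
  case empty
  show ?case
    by (simp add: PiM_empty nn_integral_count_space_finite lebesgue_integral_count_space_finite)
next
  case (insert i I)
  interpret prob_space M by fact
  interpret PS: product_sigma_finite "\<lambda>_. M"
    by unfold_locales
  define m where "m = (\<integral>z. g z \<partial>M)"
  define K where "K = d\<^sup>2 / 4 + l\<^sup>2 * b * m"
  define N where "N = (\<lambda>J. PiM J (\<lambda>_::nat. M))"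
  have f[measurable]: "f \<in> borel_measurable (N (insert i I))" using insert.prems(1) by (simp add: N_def)
  have fupd[measurable]: "(\<lambda>(x, y). f (x(i := y))) \<in> borel_measurable (N I \<Otimes>\<^sub>M M)"
    using measurable_comp[OF measurable_add_dim[of i I "\<lambda>_. M"] f[unfolded N_def]]
    by (simp add: N_def comp_def case_prod_beta')
  define fbar where "fbar = (\<lambda>x. \<integral>y. f (x(i := y)) \<partial>M)"
  have fbar_m: "fbar \<in> borel_measurable (N I)"
    unfolding fbar_def by (rule borel_measurable_lebesgue_integral) (use fupd in simp)
  have fy_m: "(\<lambda>y. f (x(i := y))) \<in> borel_measurable M" if "x \<in> space (N I)" for x
    using measurable_comp[OF measurable_component_update[of x I "\<lambda>_. M" i] f[unfolded N_def]] that insert.hyps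
    by (simp add: N_def comp_def)
  have fyb: "\<bar>f (x(i := y))\<bar> \<le> B" if "x \<in> space (N I)" "y \<in> space M" for x y
    using insert.prems(2)[OF space_PiM_upd[OF that[unfolded N_def]]] .
  have fy_i: "integrable M (\<lambda>y. f (x(i := y)))" if "x \<in> space (N I)" for x
    by (rule integrable_const_bound[where B=B]) (use fyb[OF that] fy_m[OF that] in auto)
  have fbar_b: "\<bar>fbar x\<bar> \<le> B" if x: "x \<in> space (N I)" for x
  proof -
    have "fbar x \<le> (\<integral>y. B \<partial>M)" unfolding fbar_def
      by (rule integral_mono[OF fy_i[OF x]]) (use fyb[OF x] in \<open>auto simp: abs_le_iff\<close>)
    moreover have "(\<integral>y. -B \<partial>M) \<le> fbar x" unfolding fbar_def
      by (rule integral_mono[OF _ fy_i[OF x]]) (use fyb[OF x] in \<open>force simp: abs_le_iff\<close>)+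
    ultimately show ?thesis by (simp add: prob_space)
  qed
  have fbar_r: "fbar (x(j := y)) - fbar (x(j := y')) \<le> d"
    if j: "j \<in> I" and x: "x \<in> space (N I)" and y: "y \<in> space M" and y': "y' \<in> space M" for j x y y'
  proof -
    have xj: "x(j := y) \<in> space (N I)" "x(j := y') \<in> space (N I)"
      using x y y' j by (auto simp: N_def space_PiM PiE_def extensional_def Pi_def)
    have ij: "i \<noteq> j" using j insert.hyps by auto
    have "fbar (x(j := y)) - fbar (x(j := y')) = (\<integral>z. f (x(j := y, i := z)) - f (x(j := y', i := z)) \<partial>M)"
      unfolding fbar_def using fy_i[OF xj(1)] fy_i[OF xj(2)] by simp
    also have "\<dots> \<le> (\<integral>z. d \<partial>M)"
    proof (rule integral_mono)
      show "integrable M (\<lambda>z. f (x(j := y, i := z)) - f (x(j := y', i := z)))"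
        using fy_i[OF xj(1)] fy_i[OF xj(2)] by simp
      fix z assume z: "z \<in> space M"
      have xz: "x(i := z) \<in> space (N (insert i I))" using space_PiM_upd[OF x[unfolded N_def] z] by (simp add: N_def)
      have jj: "j \<in> insert i I" using j by simp
      have "f ((x(i := z))(j := y)) - f ((x(i := z))(j := y')) \<le> d"
        by (rule insert.prems(3)[OF jj xz[unfolded N_def] y y'])
      thus "f (x(j := y, i := z)) - f (x(j := y', i := z)) \<le> d"
        by (simp only: fun_upd_twist[OF ij])
    qed simp
    finally show ?thesis by (simp add: prob_space)
  qed
  have IH: "(\<integral>\<^sup>+x. ennreal (exp (fbar x + (\<Sum>j\<in>I. l * (m - g (x j))))) \<partial>N I)
        \<le> ennreal (exp ((\<integral>x. fbar x \<partial>N I) + real (card I) * K))"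
    using insert.IH[of fbar] fbar_m fbar_b fbar_r unfolding N_def m_def K_def by blast
  have fi: "integrable (N (insert i I)) f"
    using insert.prems(1,2) unfolding N_def by (intro finite_measure.integrable_const_bound[OF prob_space.axioms(1)[OF prob_space_PiM[OF P]], where B=B]) (auto intro!: AE_I2)
  have intf: "(\<integral>x. f x \<partial>N (insert i I)) = (\<integral>x. fbar x \<partial>N I)"
    unfolding fbar_def N_def by (rule PS.product_integral_insert) (use insert.hyps fi in \<open>auto simp: N_def\<close>)
  have inner: "(\<integral>\<^sup>+y. ennreal (exp (f (x(i := y)) + (\<Sum>j\<in>insert i I. l * (m - g ((x(i := y)) j))))) \<partial>M)
      \<le> ennreal (exp (fbar x + (\<Sum>j\<in>I. l * (m - g (x j))))) * ennreal (exp K)"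
    if x: "x \<in> space (N I)" for x
  proof -
    define S where "S = (\<Sum>j\<in>I. l * (m - g (x j)))"
    define e where "e = (\<lambda>y. f (x(i := y)) - fbar x)"
    have sum_eq: "(\<Sum>j\<in>insert i I. l * (m - g ((x(i := y)) j))) = l * (m - g y) + S" for y
    proof -
      have "(\<Sum>j\<in>I. l * (m - g ((x(i := y)) j))) = S"
        unfolding S_def by (rule sum.cong) (use insert.hyps in auto)
      thus ?thesis using insert.hyps by simp
    qed
    have em[measurable]: "e \<in> borel_measurable M" unfolding e_def using fy_m[OF x] by simp
    obtain y0 where y0: "y0 \<in> space M" using not_empty by blast
    have x0: "x(i := y0) \<in> space (N (insert i I))" using space_PiM_upd[OF x[unfolded N_def] y0] by (simp add: N_def)
    have er: "e y - e y' \<le> d" if "y \<in> space M" "y' \<in> space M" for y y'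
    proof -
      have "f ((x(i := y0))(i := y)) - f ((x(i := y0))(i := y')) \<le> d"
        by (rule insert.prems(3)[OF _ x0[unfolded N_def] that]) simp
      thus ?thesis by (simp only: fun_upd_upd e_def)
    qed
    have e0: "(\<integral>y. e y \<partial>M) = 0"
      unfolding e_def using fy_i[OF x] by (simp add: fbar_def prob_space)
    note os = one_step[OF P em g er e0 gb l]
    have "(\<integral>\<^sup>+y. ennreal (exp (f (x(i := y)) + (\<Sum>j\<in>insert i I. l * (m - g ((x(i := y)) j))))) \<partial>M)
        = (\<integral>\<^sup>+y. ennreal (exp (fbar x + S)) * ennreal (exp (e y + l * (m - g y))) \<partial>M)"
      by (rule nn_integral_cong) (simp only: sum_eq, simp add: e_def flip: ennreal_mult exp_add)
    also have "\<dots> = ennreal (exp (fbar x + S)) * (\<integral>\<^sup>+y. ennreal (exp (e y + l * (m - g y))) \<partial>M)"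
      by (rule nn_integral_cmult) simp
    also have "(\<integral>\<^sup>+y. ennreal (exp (e y + l * (m - g y))) \<partial>M) \<le> ennreal (exp K)"
    proof -
      have "(\<integral>\<^sup>+y. ennreal (exp (e y + l * (m - g y))) \<partial>M) = ennreal (\<integral>y. exp (e y + l * (m - g y)) \<partial>M)"
        by (rule nn_integral_eq_integral) (use os(1) in \<open>auto simp: m_def\<close>)
      also have "\<dots> \<le> ennreal (exp K)"
        using os(2) by (simp add: K_def m_def)
      finally show ?thesis .
    qed
    finally show ?thesis unfolding S_def by (simp add: mult_left_mono)
  qed
  have fm2[measurable]: "f \<in> borel_measurable (PiM (insert i I) (\<lambda>_. M))" using f by (simp add: N_def)
  have mm: "(\<lambda>x. ennreal (exp (f x + (\<Sum>j\<in>insert i I. l * (m - g (x j)))))) \<in> borel_measurable (PiM (insert i I) (\<lambda>_. M))"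
    by measurable
  have "(\<integral>\<^sup>+x. ennreal (exp (f x + (\<Sum>j\<in>insert i I. l * (m - g (x j))))) \<partial>N (insert i I))
      = (\<integral>\<^sup>+x. (\<integral>\<^sup>+y. ennreal (exp (f (x(i := y)) + (\<Sum>j\<in>insert i I. l * (m - g ((x(i := y)) j))))) \<partial>M) \<partial>N I)"
    unfolding N_def by (rule PS.product_nn_integral_insert[OF insert.hyps(1,2) mm])
  also have "\<dots> \<le> (\<integral>\<^sup>+x. ennreal (exp (fbar x + (\<Sum>j\<in>I. l * (m - g (x j))))) * ennreal (exp K) \<partial>N I)"
    by (rule nn_integral_mono) (use inner in auto)
  also have "\<dots> = (\<integral>\<^sup>+x. ennreal (exp (fbar x + (\<Sum>j\<in>I. l * (m - g (x j))))) \<partial>N I) * ennreal (exp K)"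
    by (rule nn_integral_multc) (use fbar_m in \<open>simp add: N_def\<close>)
  also have "\<dots> \<le> ennreal (exp ((\<integral>x. fbar x \<partial>N I) + real (card I) * K)) * ennreal (exp K)"
    by (rule mult_right_mono[OF IH]) simp
  also have "\<dots> = ennreal (exp ((\<integral>x. f x \<partial>N (insert i I)) + real (card (insert i I)) * K))"
    using insert.hyps by (simp add: intf ennreal_mult[symmetric] algebra_simps flip: exp_add)
  finally show ?case by (simp add: N_def m_def K_def)
qed

lemma range_bound:
  fixes f :: "(nat \<Rightarrow> 'x) \<Rightarrow> real"
  assumes fr: "\<And>i x y y'. i < n \<Longrightarrow> x \<in> space (PiM {..<n} (\<lambda>_. M)) \<Longrightarrow> y \<in> space M \<Longrightarrow> y' \<in> space M
               \<Longrightarrow> f (x(i := y)) - f (x(i := y')) \<le> d"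
    and x: "x \<in> space (PiM {..<n} (\<lambda>_. M))" and x': "x' \<in> space (PiM {..<n} (\<lambda>_. M))"
  shows "f x - f x' \<le> real n * d"
proof -
  define mix where "mix = (\<lambda>k j. if j < k then x' j else x j)"
  have mixs: "mix k \<in> space (PiM {..<n} (\<lambda>_. M))" for k
    using x x' by (auto simp: mix_def space_PiM PiE_def extensional_def Pi_def)
  have step: "f x - f (mix k) \<le> real k * d" if "k \<le> n" for k
    using that
  proof (induction k)
    case 0 thus ?case by (simp add: mix_def)
  next
    case (Suc k)
    have k: "k < n" using Suc.prems by simp
    have e1: "mix (Suc k) = (mix k)(k := x' k)" by (auto simp: mix_def)
    have e2: "mix k = (mix k)(k := x k)" by (auto simp: mix_def)
    have xk: "x k \<in> space M" "x' k \<in> space M" using x x' k by (auto simp: space_PiM PiE_def Pi_def)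
    have "f ((mix k)(k := x k)) - f ((mix k)(k := x' k)) \<le> d"
      by (rule fr[OF k mixs xk])
    hence "f (mix k) - f (mix (Suc k)) \<le> d" using e1 e2 by metis
    thus ?case using Suc.IH Suc.prems by (simp add: algebra_simps)
  qed
  have "mix n = x'"
    using x x' by (auto simp: mix_def space_PiM PiE_def extensional_def fun_eq_iff)
  thus ?thesis using step[of n] by simp
qed

lemma det:
  fixes D L m b u c t lam :: real and n :: nat
  assumes n: "n > 0" and u: "u > 0" and L: "L \<ge> 0" and m: "0 \<le> m" "m \<le> b"
    and D: "D = m - L" and lam: "lam = (if 0 < b * m then sqrt (u / (b * m)) else 0)"
    and t: "t = real n * (u - c\<^sup>2)"
    and W: "real n * lam * D - real n * (c\<^sup>2 + lam\<^sup>2 * b * m) \<le> t"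
  shows "D \<le> 2 * sqrt (L * b * u) + 5 * b * u"
proof (cases "0 < b * m")
  case False
  hence "b * m = 0" using m by (metis less_eq_real_def mult_nonneg_nonneg order_trans)
  hence "m = 0" using m by auto
  moreover have "0 \<le> 2 * sqrt (L * b * u) + 5 * b * u" using L m u by auto
  ultimately show ?thesis using D L by linarith
next
  case True
  have b: "b > 0" using True m by (metis less_eq_real_def mult_zero_left order_trans zero_less_mult_pos2 not_le)
  have lp: "lam > 0" using True u lam by simp
  have bm0: "b \<noteq> 0" "m \<noteq> 0" using True by auto
  have l2: "lam\<^sup>2 * (b * m) = u" using True u lam bm0 by simp
  have "real n * (lam * D) \<le> real n * (c\<^sup>2 + lam\<^sup>2 * b * m + (u - c\<^sup>2))"
    using W t by (simp add: algebra_simps)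
  hence "lam * D \<le> c\<^sup>2 + lam\<^sup>2 * b * m + (u - c\<^sup>2)" using n by simp
  hence "lam * D \<le> 2 * u" using l2 by (simp add: algebra_simps)
  hence "lam * D \<le> lam * (2 * sqrt (u * (b * m)))"
  proof -
    have "lam * sqrt (u * (b * m)) = sqrt (u / (b * m) * (u * (b * m)))"
      using True lam by (simp only: real_sqrt_mult[symmetric] if_True)
    also have "u / (b * m) * (u * (b * m)) = u\<^sup>2" using bm0 by (simp add: power2_eq_square field_simps)
    finally have "u = lam * sqrt (u * (b * m))" using u by simp
    thus ?thesis using \<open>lam * D \<le> 2 * u\<close> by (simp add: algebra_simps)
  qed
  hence D2: "D \<le> 2 * sqrt (u * (b * m))" using lp by simp
  define r where "r = sqrt (L * b * u)"
  have r: "r \<ge> 0" "r\<^sup>2 = L * b * u" using L b u by (auto simp: r_def)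
  show ?thesis
  proof (rule ccontr)
    assume "\<not> ?thesis"
    hence gt: "D > 2 * r + 5 * b * u" by (simp add: r_def)
    have bu: "b * u > 0" using b u by simp
    have Dp: "D > 0" using gt r bu by linarith
    have "D\<^sup>2 \<le> (2 * sqrt (u * (b * m)))\<^sup>2"
      using D2 Dp by (intro power_mono) auto
    also have "\<dots> = 4 * (u * (b * m))" using u b m by (simp add: power_mult_distrib)
    also have "\<dots> = 4 * (b * u) * L + 4 * (b * u) * D" unfolding D by (simp add: algebra_simps)
    finally have le: "D * (D - 4 * (b * u)) \<le> 4 * (b * u) * L" by (simp add: power2_eq_square algebra_simps)
    have "(2 * r + 5 * b * u) * (2 * r + b * u) < D * (D - 4 * (b * u))"
      using gt r bu by (intro mult_strict_mono) (auto simp: algebra_simps)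
    moreover have "4 * (b * u) * L \<le> (2 * r + 5 * b * u) * (2 * r + b * u)"
    proof -
      have "4 * (b * u) * L = 4 * r\<^sup>2" using r by (simp add: algebra_simps)
      also have "\<dots> \<le> (2 * r + 5 * b * u) * (2 * r + b * u)"
      proof -
        have "0 \<le> 12 * r * (b * u) + 5 * (b * u) * (b * u)" using r bu by simp
        thus ?thesis by (simp add: power2_eq_square algebra_simps)
      qed
      finally show ?thesis .
    qed
    ultimately show False using le by linarith
  qed
qed

theorem corollary7:
  fixes M :: "'x measure" and \<pi> :: "('x \<Rightarrow> real) measure"
    and Q :: "(nat \<Rightarrow> 'x) \<Rightarrow> ('x \<Rightarrow> real) measure"
    and H :: "('x \<Rightarrow> real) \<Rightarrow> (nat \<Rightarrow> 'x) \<Rightarrow> real"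
    and n :: nat and b c \<delta> :: real
  assumes "prob_space M"
    and "n > 0"
    and "(\<lambda>(h, y). h y) \<in> borel_measurable (\<pi> \<Otimes>\<^sub>M M)"
    and "absolutely_continuous_alg \<pi> (sample_measure n M) Q"
    and "has_hamiltonian \<pi> (sample_measure n M) Q H"
    and "\<And>k h y y' x. k < n \<Longrightarrow> h \<in> space \<pi> \<Longrightarrow> y \<in> space M \<Longrightarrow> y' \<in> space M \<Longrightarrow>
           x \<in> space (sample_measure n M) \<Longrightarrow> diff_op k y y' H h x \<le> c"
    and "\<And>h y. h \<in> space \<pi> \<Longrightarrow> y \<in> space M \<Longrightarrow> 0 \<le> h y \<and> h y \<le> b"
    and "\<delta> > 0"
  shows "(\<integral>\<^sup>+ x. emeasure (Q x)
            {h \<in> space \<pi>. gen_gap M n h x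
               \<le> 2 * sqrt (emp_loss n h x * b * (c\<^sup>2 + ln (1 / \<delta>) / real n))
                 + 5 * b * (c\<^sup>2 + ln (1 / \<delta>) / real n)}
          \<partial>sample_measure n M) \<ge> ennreal (1 - \<delta>)"
proof (cases "\<delta> < 1")
  case False
  thus ?thesis by (simp add: ennreal_neg)
next
  case True
  note \<delta>1 = True
  note P = assms(1) and n = assms(2) and hy[measurable] = assms(3)
  define S where "S = sample_measure n M"
  interpret M: prob_space M by fact
  have PS: "prob_space S" unfolding S_def sample_measure_def by (rule prob_space_PiM) (use P in simp)
  interpret S: prob_space S by fact
  have spS: "space S = space (PiM {..<n} (\<lambda>_. M))" by (simp add: S_def sample_measure_def)
  have upd: "x(k := y) \<in> space S" if "x \<in> space S" "k < n" "y \<in> space M" for x k y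
    using that by (auto simp: spS space_PiM PiE_def extensional_def Pi_def)
  have Hm[measurable]: "(\<lambda>(h, x). H h x) \<in> borel_measurable (\<pi> \<Otimes>\<^sub>M S)"
    and intg: "\<And>x. x \<in> space S \<Longrightarrow> integrable \<pi> (\<lambda>h. exp (H h x))"
    and Qd: "\<And>x. x \<in> space S \<Longrightarrow> Q x = density \<pi> (\<lambda>h. ennreal (exp (H h x) / partition_fn \<pi> H x))"
    using assms(5) by (auto simp: has_hamiltonian_def S_def)
  have Qp: "\<And>x. x \<in> space S \<Longrightarrow> prob_space (Q x)" and Qs: "\<And>x. x \<in> space S \<Longrightarrow> sets (Q x) = sets \<pi>"
    using assms(4) by (auto simp: absolutely_continuous_alg_def S_def)
  define Z where "Z = partition_fn \<pi> H"
  obtain x0 where x0: "x0 \<in> space S" using S.not_empty by blast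
  have Hh[measurable]: "(\<lambda>h. H h x) \<in> borel_measurable \<pi>" if "x \<in> space S" for x
    using measurable_comp[OF measurable_Pair2'[OF that] Hm] by (simp add: comp_def)
  have Hx[measurable]: "(\<lambda>x. H h x) \<in> borel_measurable S" if "h \<in> space \<pi>" for h
    using measurable_comp[OF measurable_Pair1'[OF that] Hm] by (simp add: comp_def)
  have sp\<pi>: "space (Q x) = space \<pi>" if "x \<in> space S" for x
    using Qs[OF that] by (rule sets_eq_imp_space_eq)
  have sf\<pi>: "sigma_finite_measure \<pi>"
  proof
    define f0 where "f0 = (\<lambda>h. exp (H h x0))"
    have f0m[measurable]: "f0 \<in> borel_measurable \<pi>" unfolding f0_def using Hh[OF x0] by measurable
    define A where "A = range (\<lambda>k::nat. {h \<in> space \<pi>. 1 \<le> ennreal (real k + 1) * ennreal (f0 h)})"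
    have fin: "(\<integral>\<^sup>+h. ennreal (f0 h) * indicator (space \<pi>) h \<partial>\<pi>) < \<infinity>"
    proof -
      have "(\<integral>\<^sup>+h. ennreal (f0 h) * indicator (space \<pi>) h \<partial>\<pi>) = (\<integral>\<^sup>+h. ennreal (f0 h) \<partial>\<pi>)"
        by (rule nn_integral_cong) auto
      also have "\<dots> = ennreal (\<integral>h. f0 h \<partial>\<pi>)"
        by (rule nn_integral_eq_integral) (use intg[OF x0] in \<open>auto simp: f0_def\<close>)
      finally show ?thesis by simp
    qed
    show "\<exists>A. countable A \<and> A \<subseteq> sets \<pi> \<and> \<Union>A = space \<pi> \<and> (\<forall>a\<in>A. emeasure \<pi> a \<noteq> \<infinity>)"
    proof (intro exI[of _ A] conjI)
      show "countable A" by (simp add: A_def)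
      show "A \<subseteq> sets \<pi>" unfolding A_def by (auto intro!: pred_intros_logic) measurable
      show "\<Union>A = space \<pi>"
      proof
        show "\<Union>A \<subseteq> space \<pi>" by (auto simp: A_def)
        show "space \<pi> \<subseteq> \<Union>A"
        proof
          fix h assume h: "h \<in> space \<pi>"
          have "f0 h > 0" by (simp add: f0_def)
          obtain k :: nat where k: "1 / f0 h < real k" using reals_Archimedean2 by blast
          hence "1 \<le> real k * f0 h" using \<open>f0 h > 0\<close> by (simp add: field_simps)
          hence "1 \<le> (real k + 1) * f0 h" using \<open>f0 h > 0\<close> by (simp add: algebra_simps)
          hence "ennreal 1 \<le> ennreal ((real k + 1) * f0 h)" by (rule ennreal_leI)
          hence "1 \<le> ennreal (real k + 1) * ennreal (f0 h)"
            using \<open>f0 h > 0\<close> by (subst ennreal_mult[symmetric]) auto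
          thus "h \<in> \<Union>A" using h by (auto simp: A_def)
        qed
      qed
      show "\<forall>a\<in>A. emeasure \<pi> a \<noteq> \<infinity>"
      proof
        fix a assume "a \<in> A"
        then obtain k :: nat where a: "a = {h \<in> space \<pi>. 1 \<le> ennreal (real k + 1) * ennreal (f0 h)}"
          by (auto simp: A_def)
        have "emeasure \<pi> a \<le> ennreal (real k + 1) * (\<integral>\<^sup>+h. ennreal (f0 h) * indicator (space \<pi>) h \<partial>\<pi>)"
          unfolding a by (rule nn_integral_Markov_inequality) auto
        also have "\<dots> < \<infinity>" using fin by (simp add: ennreal_mult_less_top)
        finally show "emeasure \<pi> a \<noteq> \<infinity>" by simp
      qed
    qed
  qed
  interpret \<pi>: sigma_finite_measure \<pi> by fact
  interpret pair: pair_sigma_finite S \<pi> by unfold_locales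
  have HS[measurable]: "(\<lambda>p. H (snd p) (fst p)) \<in> borel_measurable (S \<Otimes>\<^sub>M \<pi>)"
    using measurable_comp[OF measurable_pair_swap'[of S \<pi>] Hm] by (simp add: comp_def case_prod_beta')
  have Zm[measurable]: "Z \<in> borel_measurable S"
  proof -
    have "(\<lambda>(x, h). exp (H h x)) \<in> borel_measurable (S \<Otimes>\<^sub>M \<pi>)"
      using HS by (simp add: case_prod_beta')
    hence "(\<lambda>x. \<integral>h. exp (H h x) \<partial>\<pi>) \<in> borel_measurable S"
      by (rule \<pi>.borel_measurable_lebesgue_integral)
    thus ?thesis by (simp add: Z_def partition_fn_def[abs_def])
  qed
  have Zpos: "Z x > 0" if x: "x \<in> space S" for x
  proof (rule ccontr)
    assume "\<not> Z x > 0"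
    moreover have "Z x \<ge> 0" unfolding Z_def partition_fn_def by simp
    ultimately have Z0: "Z x = 0" by simp
    have "emeasure (Q x) (space \<pi>) = (\<integral>\<^sup>+h. ennreal (exp (H h x) / Z x) * indicator (space \<pi>) h \<partial>\<pi>)"
      unfolding Qd[OF x] Z_def by (rule emeasure_density) (use x in auto)
    also have "\<dots> = 0" by (simp add: Z0)
    finally show False using prob_space.emeasure_space_1[OF Qp[OF x]] sp\<pi>[OF x] by simp
  qed
  have Zratio: "Z (x(k := y')) \<le> exp c * Z (x(k := y))"
    if x: "x \<in> space S" and k: "k < n" and y: "y \<in> space M" and y': "y' \<in> space M" for x k y y'
  proof -
    have "Z (x(k := y')) \<le> (\<integral>h. exp c * exp (H h (x(k := y))) \<partial>\<pi>)"
      unfolding Z_def partition_fn_def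
    proof (rule integral_mono)
      show "integrable \<pi> (\<lambda>h. exp (H h (x(k := y'))))" by (rule intg[OF upd[OF x k y']])
      show "integrable \<pi> (\<lambda>h. exp c * exp (H h (x(k := y))))" using intg[OF upd[OF x k y]] by simp
      fix h assume h: "h \<in> space \<pi>"
      have "diff_op k y' y H h x \<le> c" using assms(6)[OF k h y' y] x by (simp add: S_def)
      hence "H h (x(k := y')) \<le> c + H h (x(k := y))" by (simp add: diff_op_def subst_coord_def)
      thus "exp (H h (x(k := y'))) \<le> exp c * exp (H h (x(k := y)))" by (simp flip: exp_add)
    qed
    thus ?thesis unfolding Z_def partition_fn_def by simp
  qed
  obtain y0 where y0: "y0 \<in> space M" using M.not_empty by blast
  obtain h0 where h0: "h0 \<in> space \<pi>" using prob_space.not_empty[OF Qp[OF x0]] sp\<pi>[OF x0] by blast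
  have bpos: "0 \<le> b" using assms(7)[OF h0 y0] by linarith
  define t where "t = ln (1 / \<delta>)"
  define u where "u = c\<^sup>2 + t / real n"
  have tpos: "t > 0" using \<delta>1 assms(8) by (simp add: t_def)
  have upos: "u > 0" using tpos n by (simp add: u_def add_nonneg_pos)
  define m where "m = (\<lambda>h::'x \<Rightarrow> real. \<integral>y. h y \<partial>M)"
  have mm[measurable]: "m \<in> borel_measurable \<pi>"
    unfolding m_def by (rule M.borel_measurable_lebesgue_integral) (use hy in simp)
  define lam where "lam = (\<lambda>h. if 0 < b * m h then sqrt (u / (b * m h)) else 0)"
  have lam_nn: "0 \<le> lam h" for h using upos by (simp add: lam_def)
  define \<psi> where "\<psi> = (\<lambda>h x. H h x - ln (Z x))"
  define W where "W = (\<lambda>h x. (\<Sum>i<n. lam h * (m h - h (x i))) - real n * (c\<^sup>2 + (lam h)\<^sup>2 * b * m h))"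
  have \<psi>r: "\<psi> h (x(i := y)) - \<psi> h (x(i := y')) \<le> 2 * c"
    if h: "h \<in> space \<pi>" and i: "i < n" and x: "x \<in> space S" and y: "y \<in> space M" and y': "y' \<in> space M" for h i x y y'
  proof -
    have "diff_op i y y' H h x \<le> c" using assms(6)[OF i h y y'] x by (simp add: S_def)
    hence 1: "H h (x(i := y)) - H h (x(i := y')) \<le> c" by (simp add: diff_op_def subst_coord_def)
    have "ln (Z (x(i := y'))) \<le> ln (exp c * Z (x(i := y)))"
      using Zratio[OF x i y y'] Zpos[OF upd[OF x i y']] by simp
    also have "\<dots> = c + ln (Z (x(i := y)))" using Zpos[OF upd[OF x i y]] by (simp add: ln_mult)
    finally show ?thesis using 1 by (simp add: \<psi>_def)
  qed
  have \<psi>m[measurable]: "\<psi> h \<in> borel_measurable S" if h: "h \<in> space \<pi>" for h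
    unfolding \<psi>_def using Hx[OF h] by measurable
  have \<psi>b: "\<bar>\<psi> h x\<bar> \<le> \<bar>\<psi> h x0\<bar> + real n * \<bar>2 * c\<bar>" if h: "h \<in> space \<pi>" and x: "x \<in> space S" for h x
  proof -
    have fr: "\<And>i x y y'. i < n \<Longrightarrow> x \<in> space (PiM {..<n} (\<lambda>_. M)) \<Longrightarrow> y \<in> space M \<Longrightarrow> y' \<in> space M
               \<Longrightarrow> \<psi> h (x(i := y)) - \<psi> h (x(i := y')) \<le> 2 * c"
      using \<psi>r[OF h] by (simp add: spS)
    have "\<psi> h x - \<psi> h x0 \<le> real n * (2 * c)" by (rule range_bound[where f="\<psi> h", OF fr]) (use x x0 in \<open>auto simp: spS\<close>)
    moreover have "\<psi> h x0 - \<psi> h x \<le> real n * (2 * c)" by (rule range_bound[where f="\<psi> h", OF fr]) (use x x0 in \<open>auto simp: spS\<close>)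
    moreover have "real n * (2 * c) \<le> real n * \<bar>2 * c\<bar>" by (intro mult_left_mono) auto
    ultimately show ?thesis by linarith
  qed
  have hM[measurable]: "h \<in> borel_measurable M" if h: "h \<in> space \<pi>" for h
    using measurable_comp[OF measurable_Pair1'[OF h] hy] by (simp add: comp_def)
  have hxS: "(\<lambda>x. h (x i)) \<in> borel_measurable S" if h: "h \<in> space \<pi>" and i: "i \<in> {..<n}" for h i
  proof -
    have "(\<lambda>x. x i) \<in> measurable S M" unfolding S_def sample_measure_def using i by measurable
    from measurable_comp[OF this hM[OF h]] show ?thesis by (simp add: comp_def)
  qed
  have G1: "(\<integral>\<^sup>+x. ennreal (exp (\<psi> h x + W h x)) \<partial>S) \<le> (\<integral>\<^sup>+x. ennreal (exp (\<psi> h x)) \<partial>S)"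
    if h: "h \<in> space \<pi>" for h
  proof -
    define K where "K = c\<^sup>2 + (lam h)\<^sup>2 * b * m h"
    define B where "B = \<bar>\<psi> h x0\<bar> + real n * \<bar>2 * c\<bar>"
    have core': "(\<integral>\<^sup>+x. ennreal (exp (\<psi> h x + (\<Sum>i\<in>{..<n}. lam h * ((\<integral>z. h z \<partial>M) - h (x i))))) \<partial>PiM {..<n} (\<lambda>_. M))
         \<le> ennreal (exp ((\<integral>x. \<psi> h x \<partial>PiM {..<n} (\<lambda>_. M)) + real (card {..<n}) * ((2 * c)\<^sup>2 / 4 + (lam h)\<^sup>2 * b * (\<integral>z. h z \<partial>M))))"
    proof (rule core[OF P, where B=B])
      show "\<psi> h \<in> borel_measurable (PiM {..<n} (\<lambda>_. M))" using \<psi>m[OF h] by (simp add: S_def sample_measure_def)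
      show "\<bar>\<psi> h x\<bar> \<le> B" if "x \<in> space (PiM {..<n} (\<lambda>_. M))" for x
        using \<psi>b[OF h, of x] that by (simp add: spS B_def)
      show "\<psi> h (x(i := y)) - \<psi> h (x(i := y')) \<le> 2 * c"
        if "i \<in> {..<n}" "x \<in> space (PiM {..<n} (\<lambda>_. M))" "y \<in> space M" "y' \<in> space M" for i x y y'
        using \<psi>r[OF h, of i x y y'] that by (simp add: spS)
      show "h \<in> borel_measurable M" by (rule hM[OF h])
      show "0 \<le> h y \<and> h y \<le> b" if "y \<in> space M" for y using assms(7)[OF h that] .
    qed (simp_all add: lam_nn)
    hence core'': "(\<integral>\<^sup>+x. ennreal (exp (\<psi> h x + (\<Sum>i<n. lam h * (m h - h (x i))))) \<partial>S)
         \<le> ennreal (exp ((\<integral>x. \<psi> h x \<partial>S) + real n * K))"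
      by (simp add: S_def sample_measure_def m_def K_def power2_eq_square)
    have "(\<integral>\<^sup>+x. ennreal (exp (\<psi> h x + W h x)) \<partial>S)
        = (\<integral>\<^sup>+x. ennreal (exp (\<psi> h x + (\<Sum>i<n. lam h * (m h - h (x i))))) * ennreal (exp (- (real n * K))) \<partial>S)"
      by (rule nn_integral_cong) (simp add: W_def K_def flip: ennreal_mult exp_add)
    also have "\<dots> = (\<integral>\<^sup>+x. ennreal (exp (\<psi> h x + (\<Sum>i<n. lam h * (m h - h (x i))))) \<partial>S) * ennreal (exp (- (real n * K)))"
    proof (rule nn_integral_multc)
      note [measurable] = hxS[OF h] \<psi>m[OF h]
      show "(\<lambda>x. ennreal (exp (\<psi> h x + (\<Sum>i<n. lam h * (m h - h (x i)))))) \<in> borel_measurable S"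
        by measurable
    qed
    also have "\<dots> \<le> ennreal (exp ((\<integral>x. \<psi> h x \<partial>S) + real n * K)) * ennreal (exp (- (real n * K)))"
      by (rule mult_right_mono[OF core'']) simp
    also have "\<dots> = ennreal (exp (\<integral>x. \<psi> h x \<partial>S))"
      by (simp flip: ennreal_mult exp_add)
    also have "\<dots> \<le> (\<integral>\<^sup>+x. ennreal (exp (\<psi> h x)) \<partial>S)"
    proof -
      define E where "E = (\<integral>x. \<psi> h x \<partial>S)"
      have i\<psi>: "integrable S (\<psi> h)"
        by (rule S.integrable_const_bound[where B=B]) (use \<psi>b[OF h] \<psi>m[OF h] in \<open>auto simp: B_def\<close>)
      have ie: "integrable S (\<lambda>x. exp (\<psi> h x))"
        by (rule S.integrable_const_bound[where B="exp B"]) (use \<psi>b[OF h] \<psi>m[OF h] in \<open>auto simp: B_def abs_le_iff\<close>)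
      have "exp E = (\<integral>x. exp E * (1 + (\<psi> h x - E)) \<partial>S)"
        using i\<psi> by (simp add: E_def algebra_simps S.prob_space)
      also have "\<dots> \<le> (\<integral>x. exp (\<psi> h x) \<partial>S)"
      proof (rule integral_mono)
        show "integrable S (\<lambda>x. exp E * (1 + (\<psi> h x - E)))" using i\<psi> by simp
        show "integrable S (\<lambda>x. exp (\<psi> h x))" by (rule ie)
        fix x
        have "exp E * (1 + (\<psi> h x - E)) \<le> exp E * exp (\<psi> h x - E)"
          by (intro mult_left_mono exp_ge_add_one_self) auto
        thus "exp E * (1 + (\<psi> h x - E)) \<le> exp (\<psi> h x)" by (simp flip: exp_add)
      qed
      finally have "exp E \<le> (\<integral>x. exp (\<psi> h x) \<partial>S)" .
      moreover have "(\<integral>\<^sup>+x. ennreal (exp (\<psi> h x)) \<partial>S) = ennreal (\<integral>x. exp (\<psi> h x) \<partial>S)"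
        by (rule nn_integral_eq_integral) (use ie in auto)
      ultimately show ?thesis by (simp add: E_def)
    qed
    finally show ?thesis .
  qed
  have lamm[measurable]: "lam \<in> borel_measurable \<pi>" unfolding lam_def by measurable
  have hxi[measurable]: "(\<lambda>p. snd p (fst p i)) \<in> borel_measurable (S \<Otimes>\<^sub>M \<pi>)" if i: "i \<in> {..<n}" for i
  proof -
    have "(\<lambda>p. (snd p, fst p i)) \<in> measurable (S \<Otimes>\<^sub>M \<pi>) (\<pi> \<Otimes>\<^sub>M M)"
      unfolding S_def sample_measure_def using i by measurable
    from measurable_comp[OF this hy] show ?thesis by (simp add: comp_def)
  qed
  have Fm[measurable]: "(\<lambda>(x, h). ennreal (exp (\<psi> h x + W h x))) \<in> borel_measurable (S \<Otimes>\<^sub>M \<pi>)"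
    unfolding \<psi>_def W_def by measurable
  have F0m[measurable]: "(\<lambda>(x, h). ennreal (exp (\<psi> h x))) \<in> borel_measurable (S \<Otimes>\<^sub>M \<pi>)"
    unfolding \<psi>_def by measurable
  have Q1: "(\<integral>\<^sup>+h. ennreal (exp (\<psi> h x)) \<partial>\<pi>) = 1" if x: "x \<in> space S" for x
  proof -
    have "(\<integral>\<^sup>+h. ennreal (exp (\<psi> h x)) \<partial>\<pi>) = (\<integral>\<^sup>+h. ennreal (exp (H h x) / Z x) * indicator (space \<pi>) h \<partial>\<pi>)"
      by (rule nn_integral_cong) (use Zpos[OF x] in \<open>simp add: \<psi>_def exp_diff\<close>)
    also have "\<dots> = emeasure (Q x) (space \<pi>)"
      unfolding Qd[OF x] Z_def by (rule emeasure_density[symmetric]) (use x in auto)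
    also have "\<dots> = 1" using prob_space.emeasure_space_1[OF Qp[OF x]] sp\<pi>[OF x] by simp
    finally show ?thesis .
  qed
  have G3: "(\<integral>\<^sup>+x. (\<integral>\<^sup>+h. ennreal (exp (\<psi> h x + W h x)) \<partial>\<pi>) \<partial>S) \<le> 1"
  proof -
    have "(\<integral>\<^sup>+x. (\<integral>\<^sup>+h. ennreal (exp (\<psi> h x + W h x)) \<partial>\<pi>) \<partial>S)
        = (\<integral>\<^sup>+h. (\<integral>\<^sup>+x. ennreal (exp (\<psi> h x + W h x)) \<partial>S) \<partial>\<pi>)"
      by (rule pair.Fubini'[symmetric]) (use Fm in simp)
    also have "\<dots> \<le> (\<integral>\<^sup>+h. (\<integral>\<^sup>+x. ennreal (exp (\<psi> h x)) \<partial>S) \<partial>\<pi>)"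
      by (rule nn_integral_mono) (rule G1)
    also have "\<dots> = (\<integral>\<^sup>+x. (\<integral>\<^sup>+h. ennreal (exp (\<psi> h x)) \<partial>\<pi>) \<partial>S)"
      by (rule pair.Fubini') (use F0m in simp)
    also have "\<dots> = (\<integral>\<^sup>+x. 1 \<partial>S)"
      by (rule nn_integral_cong) (rule Q1)
    also have "\<dots> = 1" by (simp add: S.emeasure_space_1)
    finally show ?thesis .
  qed
  define R where "R = (\<lambda>(h::'x \<Rightarrow> real) (x::nat \<Rightarrow> 'x). 2 * sqrt (emp_loss n h x * b * (c\<^sup>2 + ln (1 / \<delta>) / real n))
                 + 5 * b * (c\<^sup>2 + ln (1 / \<delta>) / real n))"
  define A where "A = (\<lambda>x. {h \<in> space \<pi>. gen_gap M n h x \<le> R h x})"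
  have gg: "gen_gap M n h x = m h - emp_loss n h x" for h x by (simp add: gen_gap_def m_def)
  have detW: "gen_gap M n h x \<le> R h x" if h: "h \<in> space \<pi>" and x: "x \<in> space S" and Wt: "W h x \<le> t" for h x
  proof -
    have xi: "x i \<in> space M" if "i < n" for i using x that by (auto simp: spS space_PiM PiE_def Pi_def)
    have L: "0 \<le> emp_loss n h x" unfolding emp_loss_def
      using assms(7)[OF h xi] by (auto intro!: divide_nonneg_nonneg sum_nonneg)
    have ih: "integrable M h" by (rule M.integrable_const_bound[where B=b]) (use assms(7)[OF h] hM[OF h] in auto)
    have m0: "0 \<le> m h" unfolding m_def by (rule Bochner_Integration.integral_nonneg) (use assms(7)[OF h] in auto)
    have mb: "m h \<le> b"
    proof -
      have "m h \<le> (\<integral>y. b \<partial>M)" unfolding m_def by (rule integral_mono[OF ih]) (use assms(7)[OF h] in auto)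
      thus ?thesis by (simp add: M.prob_space)
    qed
    have tt: "t = real n * (u - c\<^sup>2)" using n by (simp add: u_def)
    have "W h x = real n * lam h * gen_gap M n h x - real n * (c\<^sup>2 + (lam h)\<^sup>2 * b * m h)"
      using n by (simp add: W_def gg emp_loss_def sum_subtractf sum_distrib_left[symmetric] algebra_simps)
    hence W': "real n * lam h * gen_gap M n h x - real n * (c\<^sup>2 + (lam h)\<^sup>2 * b * m h) \<le> t" using Wt by simp
    have "gen_gap M n h x \<le> 2 * sqrt (emp_loss n h x * b * u) + 5 * b * u"
      by (rule det[OF n upos L m0 mb gg lam_def[THEN fun_cong] tt W'])
    thus ?thesis by (simp add: R_def u_def t_def)
  qed
  define G where "G = (\<lambda>x. \<integral>\<^sup>+h. ennreal (exp (\<psi> h x + W h x)) \<partial>\<pi>)"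
  have Gm: "G \<in> borel_measurable S"
    unfolding G_def by (rule \<pi>.borel_measurable_nn_integral) (use Fm in simp)
  have hx\<pi>: "(\<lambda>h. h (x i)) \<in> borel_measurable \<pi>" if "x \<in> space S" "i \<in> {..<n}" for x i
  proof -
    have "x i \<in> space M" using that by (auto simp: spS space_PiM PiE_def Pi_def)
    from measurable_comp[OF measurable_Pair2'[OF this] hy] show ?thesis by (simp add: comp_def)
  qed
  have Aset: "A x \<in> sets \<pi>" if x: "x \<in> space S" for x
  proof -
    note [measurable] = hx\<pi>[OF x]
    have el[measurable]: "(\<lambda>h. emp_loss n h x) \<in> borel_measurable \<pi>" unfolding emp_loss_def by measurable
    have gm[measurable]: "(\<lambda>h. gen_gap M n h x) \<in> borel_measurable \<pi>" unfolding gg by measurable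
    have Rm[measurable]: "(\<lambda>h. R h x) \<in> borel_measurable \<pi>" unfolding R_def by measurable
    show ?thesis unfolding A_def by measurable
  qed
  define AS where "AS = {p \<in> space (S \<Otimes>\<^sub>M \<pi>). gen_gap M n (snd p) (fst p) \<le> R (snd p) (fst p)}"
  have el2[measurable]: "(\<lambda>p. emp_loss n (snd p) (fst p)) \<in> borel_measurable (S \<Otimes>\<^sub>M \<pi>)"
    unfolding emp_loss_def by measurable
  have gm2[measurable]: "(\<lambda>p. gen_gap M n (snd p) (fst p)) \<in> borel_measurable (S \<Otimes>\<^sub>M \<pi>)"
    unfolding gg by measurable
  have Rm2[measurable]: "(\<lambda>p. R (snd p) (fst p)) \<in> borel_measurable (S \<Otimes>\<^sub>M \<pi>)"
    unfolding R_def by measurable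
  have ASm[measurable]: "AS \<in> sets (S \<Otimes>\<^sub>M \<pi>)"
    unfolding AS_def by measurable
  define QA where "QA = (\<lambda>x. \<integral>\<^sup>+h. ennreal (exp (\<psi> h x)) * indicator AS (x, h) \<partial>\<pi>)"
  have QAm: "QA \<in> borel_measurable S"
    unfolding QA_def by (rule \<pi>.borel_measurable_nn_integral) (use F0m in simp)
  have QAe: "emeasure (Q x) (A x) = QA x" if x: "x \<in> space S" for x
  proof -
    have "emeasure (Q x) (A x) = (\<integral>\<^sup>+h. ennreal (exp (H h x) / Z x) * indicator (A x) h \<partial>\<pi>)"
      unfolding Qd[OF x] Z_def by (rule emeasure_density) (use x Aset[OF x] in \<open>auto simp: Z_def\<close>)
    also have "\<dots> = QA x" unfolding QA_def
    proof (rule nn_integral_cong)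
      fix h assume h: "h \<in> space \<pi>"
      have e1: "exp (H h x) / Z x = exp (\<psi> h x)" using Zpos[OF x] by (simp add: \<psi>_def exp_diff)
      have e2: "(h \<in> A x) = ((x, h) \<in> AS)" using x h by (simp add: A_def AS_def space_pair_measure)
      show "ennreal (exp (H h x) / Z x) * indicator (A x) h = ennreal (exp (\<psi> h x)) * indicator AS (x, h)"
        unfolding e1 indicator_def e2 ..
    qed
    finally show ?thesis .
  qed
  have G4: "1 \<le> emeasure (Q x) (A x) + ennreal \<delta> * G x" if x: "x \<in> space S" for x
  proof -
    have Ac: "emeasure (Q x) (space \<pi> - A x) \<le> ennreal \<delta> * G x"
    proof -
      have "emeasure (Q x) (space \<pi> - A x) = (\<integral>\<^sup>+h. ennreal (exp (H h x) / Z x) * indicator (space \<pi> - A x) h \<partial>\<pi>)"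
        unfolding Qd[OF x] Z_def by (rule emeasure_density) (use x Aset[OF x] in \<open>auto simp: Z_def\<close>)
      also have "\<dots> \<le> (\<integral>\<^sup>+h. ennreal \<delta> * ennreal (exp (\<psi> h x + W h x)) \<partial>\<pi>)"
      proof (rule nn_integral_mono)
        fix h assume h: "h \<in> space \<pi>"
        show "ennreal (exp (H h x) / Z x) * indicator (space \<pi> - A x) h \<le> ennreal \<delta> * ennreal (exp (\<psi> h x + W h x))"
        proof (cases "h \<in> A x")
          case True thus ?thesis by simp
        next
          case False
          hence "\<not> gen_gap M n h x \<le> R h x" using h by (simp add: A_def)
          hence Wt: "W h x > t"
          proof -
            assume ng: "\<not> gen_gap M n h x \<le> R h x"
            show "W h x > t"
            proof (rule ccontr)
              assume "\<not> W h x > t"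
              hence "W h x \<le> t" by simp
              from detW[OF h x this] ng show False by simp
            qed
          qed
          have "exp (H h x) / Z x = exp (\<psi> h x) * (\<delta> * exp t)"
            using Zpos[OF x] assms(8) by (simp add: \<psi>_def exp_diff t_def)
          also have "\<dots> \<le> exp (\<psi> h x) * (\<delta> * exp (W h x))"
            using Wt assms(8) by (intro mult_left_mono) auto
          also have "\<dots> = \<delta> * exp (\<psi> h x + W h x)" by (simp add: exp_add)
          finally have "exp (H h x) / Z x \<le> \<delta> * exp (\<psi> h x + W h x)" .
          hence "ennreal (exp (H h x) / Z x) \<le> ennreal (\<delta> * exp (\<psi> h x + W h x))" by (rule ennreal_leI)
          thus ?thesis using False h assms(8) by (simp add: ennreal_mult)
        qed
      qed
      also have "\<dots> = ennreal \<delta> * G x" unfolding G_def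
        by (rule nn_integral_cmult) (use x in measurable)
      finally show ?thesis .
    qed
    have "1 = emeasure (Q x) (space \<pi>)" using prob_space.emeasure_space_1[OF Qp[OF x]] sp\<pi>[OF x] by simp
    also have "\<dots> = emeasure (Q x) (A x) + emeasure (Q x) (space \<pi> - A x)"
    proof -
      have "A x \<subseteq> space \<pi>" by (auto simp: A_def)
      hence "space \<pi> = A x \<union> (space \<pi> - A x)" by auto
      moreover have "emeasure (Q x) (A x) + emeasure (Q x) (space \<pi> - A x) = emeasure (Q x) (A x \<union> (space \<pi> - A x))"
        by (rule plus_emeasure) (use Aset[OF x] Qs[OF x] in auto)
      ultimately show ?thesis by simp
    qed
    also have "\<dots> \<le> emeasure (Q x) (A x) + ennreal \<delta> * G x" using Ac by (rule add_left_mono)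
    finally show ?thesis .
  qed
  define X where "X = (\<integral>\<^sup>+x. emeasure (Q x) (A x) \<partial>S)"
  have XQA: "X = (\<integral>\<^sup>+x. QA x \<partial>S)" unfolding X_def by (rule nn_integral_cong) (rule QAe)
  have "1 = (\<integral>\<^sup>+x. 1 \<partial>S)" by (simp add: S.emeasure_space_1)
  also have "\<dots> \<le> (\<integral>\<^sup>+x. QA x + ennreal \<delta> * G x \<partial>S)"
    by (rule nn_integral_mono) (use G4 QAe in simp)
  also have "\<dots> = (\<integral>\<^sup>+x. QA x \<partial>S) + ennreal \<delta> * (\<integral>\<^sup>+x. G x \<partial>S)"
    using QAm Gm by (simp add: nn_integral_add nn_integral_cmult)
  also have "\<dots> \<le> X + ennreal \<delta> * 1"
    using G3 unfolding XQA G_def by (intro add_left_mono mult_left_mono) auto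
  finally have X1: "1 \<le> X + ennreal \<delta>" by simp
  have "ennreal (1 - \<delta>) \<le> X"
  proof (cases X rule: ennreal_cases)
    case (real r)
    have eq: "ennreal r + ennreal \<delta> = ennreal (r + \<delta>)" using real assms(8) by (subst ennreal_plus) auto
    have "ennreal 1 \<le> ennreal (r + \<delta>)" using X1 unfolding real eq ennreal_1 .
    hence "1 \<le> r + \<delta>" using real assms(8) by (subst (asm) ennreal_le_iff) auto
    thus ?thesis unfolding \<open>X = ennreal r\<close> by (intro ennreal_leI) simp
  qed simp
  thus ?thesis by (simp add: X_def A_def R_def S_def)
qed

end
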